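(* Let $\mathbf x$ be a $p$-variate random vector with finite second moments and full-rank covariance, let $\mathbf x^{st}=\mathrm{Cov}(\mathbf x)^{-1/2}(\mathbf x-E(\mathbf x))$, and suppose there exist a nonsingular $\mathbf A$ and vector $\mathbf b$ such that $\mathbf z=\mathbf A\mathbf x+\mathbf b=(z_1,\dots,z_p)'$ has mutually independent components with $E(\mathbf z)=\mathbf 0$ and $\mathrm{Cov}(\mathbf z)=\mathbf I_p$. Let $D$ be a squared dispersion measure defined on all linear combinations of $z_1,\dots,z_p$, and let $\mathbf v\in\mathbb{R}^p$ with $\mathbf v'\mathbf v=1$. (1) If $D$ is subadditive, then $D(\mathbf v'\mathbf x^{st})\le\max_j D(z_j)$. (2) If $D$ is superadditive, then $D(\mathbf v'\mathbf x^{st})\ge\min_j D(z_j)$.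
   Context: $\mathrm{Cov}(\mathbf x)^{-1/2}=\mathbf U\mathbf D^{-1/2}\mathbf U'$ where $\mathrm{Cov}(\mathbf x)=\mathbf U\mathbf D\mathbf U'$ is the eigendecomposition. A squared dispersion measure $D$ depends only on the distribution of its argument and satisfies $D(ax+b)=a^2D(x)$ for all real $a,b$, $D\ge0$. It is subadditive if $D(x+y)\le D(x)+D(y)$ for all independent $x,y$, and superadditive if $D(x+y)\ge D(x)+D(y)$ for all independent $x,y$. *)

theory Defs
  imports "HOL-Probability.Probability"
begin

definition mean_vec :: "'a measure \<Rightarrow> ('a \<Rightarrow> real^'p) \<Rightarrow> real^'p" where
  "mean_vec M x = (\<chi> i. integral\<^sup>L M (\<lambda>\<omega>. x \<omega> $ i))"

definition cov_mat :: "'a measure \<Rightarrow> ('a \<Rightarrow> real^'p) \<Rightarrow> real^'p^'p" where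
  "cov_mat M x = (\<chi> i j. integral\<^sup>L M (\<lambda>\<omega>. (x \<omega> $ i - mean_vec M x $ i) * (x \<omega> $ j - mean_vec M x $ j)))"

definition diag_mat :: "('p \<Rightarrow> real) \<Rightarrow> real^'p^'p" where
  "diag_mat d = (\<chi> i j. if i = j then d i else 0)"

definition inv_sqrt_mat :: "real^'p^'p \<Rightarrow> real^'p^'p" where
  "inv_sqrt_mat C = (SOME S. \<exists>U d. orthogonal_matrix U \<and> C = U ** diag_mat d ** transpose U
      \<and> S = U ** diag_mat (\<lambda>i. 1 / sqrt (d i)) ** transpose U)"

definition standardize :: "'a measure \<Rightarrow> ('a \<Rightarrow> real^'p) \<Rightarrow> 'a \<Rightarrow> real^'p" where
  "standardize M x = (\<lambda>\<omega>. inv_sqrt_mat (cov_mat M x) *v (x \<omega> - mean_vec M x))"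

definition lin_combs :: "('a \<Rightarrow> real^'p) \<Rightarrow> ('a \<Rightarrow> real) set" where
  "lin_combs z = {u. \<exists>c d. u = (\<lambda>\<omega>. c \<bullet> z \<omega> + d)}"

definition sq_dispersion_on :: "'a measure \<Rightarrow> ('a \<Rightarrow> real^'p) \<Rightarrow> (real measure \<Rightarrow> real) \<Rightarrow> bool" where
  "sq_dispersion_on M z D \<longleftrightarrow>
     (\<forall>u \<in> lin_combs z. D (distr M borel u) \<ge> 0) \<and>
     (\<forall>u \<in> lin_combs z. \<forall>a b::real.
        D (distr M borel (\<lambda>\<omega>. a * u \<omega> + b)) = a\<^sup>2 * D (distr M borel u))"

definition subadditive_on :: "'a measure \<Rightarrow> ('a \<Rightarrow> real^'p) \<Rightarrow> (real measure \<Rightarrow> real) \<Rightarrow> bool" where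
  "subadditive_on M z D \<longleftrightarrow>
     (\<forall>u \<in> lin_combs z. \<forall>w \<in> lin_combs z. prob_space.indep_var M borel u borel w \<longrightarrow>
        D (distr M borel (\<lambda>\<omega>. u \<omega> + w \<omega>)) \<le> D (distr M borel u) + D (distr M borel w))"

definition superadditive_on :: "'a measure \<Rightarrow> ('a \<Rightarrow> real^'p) \<Rightarrow> (real measure \<Rightarrow> real) \<Rightarrow> bool" where
  "superadditive_on M z D \<longleftrightarrow>
     (\<forall>u \<in> lin_combs z. \<forall>w \<in> lin_combs z. prob_space.indep_var M borel u borel w \<longrightarrow>
        D (distr M borel (\<lambda>\<omega>. u \<omega> + w \<omega>)) \<ge> D (distr M borel u) + D (distr M borel w))"

end

theory Submission
  imports Defs
begin

lemma inner_mat_sym: "(x::real^'n) \<bullet> (C *v y) = (transpose C *v x) \<bullet> y"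
  by (metis dot_lmul_matrix inner_commute transpose_matrix_vector transpose_transpose)

lemma eig_in_perp:
  fixes C :: "real^'n^'n" and S :: "(real^'n) set"
  assumes sym: "transpose C = C"
    and inv: "\<And>x. (\<forall>s\<in>S. s \<bullet> x = 0) \<Longrightarrow> (\<forall>s\<in>S. s \<bullet> (C *v x) = 0)"
    and ex: "x0 \<noteq> 0" "\<forall>s\<in>S. s \<bullet> x0 = 0"
  shows "\<exists>u. norm u = 1 \<and> (\<forall>s\<in>S. s \<bullet> u = 0) \<and> (\<exists>l. C *v u = l *\<^sub>R u)"
proof -
  define W where "W = {x::real^'n. \<forall>s\<in>S. s \<bullet> x = 0}"
  define K where "K = sphere (0::real^'n) 1 \<inter> W"
  define q where "q = (\<lambda>x::real^'n. x \<bullet> (C *v x))"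
  have Wsub: "a *\<^sub>R x + b *\<^sub>R y \<in> W" if "x \<in> W" "y \<in> W" for a b x y
    using that by (simp add: W_def inner_add_right)
  have closedW: "closed W"
  proof -
    have "W = (\<Inter>s\<in>S. {x. s \<bullet> x = 0})" by (auto simp: W_def)
    then show ?thesis by (auto intro!: closed_INT closed_hyperplane)
  qed
  have "compact K" unfolding K_def
    by (simp add: closedW compact_Int_closed)
  moreover have "K \<noteq> {}"
  proof -
    have "(1 / norm x0) *\<^sub>R x0 \<in> K" using ex by (auto simp: K_def W_def)
    then show ?thesis by blast
  qed
  moreover have "continuous_on K q"
    unfolding q_def by (intro continuous_intros linear_continuous_on matrix_vector_mul_bounded_linear)
  ultimately obtain u where uK: "u \<in> K" and umax: "\<And>y. y \<in> K \<Longrightarrow> q y \<le> q u"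
    using continuous_attains_sup[of K q] by blast
  have nu: "norm u = 1" and uW: "u \<in> W" using uK by (auto simp: K_def)
  define l where "l = q u"
  have bound: "q y \<le> l * (y \<bullet> y)" if "y \<in> W" for y
  proof (cases "y = 0")
    case True then show ?thesis by (simp add: q_def)
  next
    case False
    let ?y = "(1 / norm y) *\<^sub>R y"
    have "?y \<in> W" using Wsub[OF that that, of "1/norm y" 0] by simp
    then have "?y \<in> K" using False by (auto simp: K_def)
    then have "q ?y \<le> l" using umax l_def by auto
    moreover have "q ?y = q y / (norm y)^2"
      by (simp add: q_def inner_commute power2_eq_square matrix_vector_mult_scaleR)
    moreover have "y \<bullet> y = (norm y)^2" by (simp add: power2_norm_eq_inner)
    ultimately show ?thesis using False
      by (simp add: divide_le_eq)
  qed
  define r where "r = C *v u - l *\<^sub>R u"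
  have rW: "r \<in> W"
  proof -
    have "\<forall>s\<in>S. s \<bullet> u = 0" using uW by (simp add: W_def)
    moreover then have "\<forall>s\<in>S. s \<bullet> (C *v u) = 0" using inv by blast
    ultimately show ?thesis unfolding r_def W_def by (simp add: inner_diff_right)
  qed
  have uu: "u \<bullet> u = 1" using nu by (simp add: norm_eq_1)
  have ur: "u \<bullet> r = 0" unfolding r_def
    by (simp add: inner_diff_right uu l_def q_def)
  then have ru: "r \<bullet> u = 0" by (simp add: inner_commute)
  have rCu: "r \<bullet> (C *v u) = r \<bullet> r"
  proof -
    have "r \<bullet> (C *v u) = r \<bullet> (r + l *\<^sub>R u)" by (simp add: r_def)
    also have "\<dots> = r \<bullet> r" by (simp add: inner_add_right ru)
    finally show ?thesis .
  qed
  have "r = 0"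
  proof (rule ccontr)
    assume "r \<noteq> 0"
    then have rr: "r \<bullet> r > 0" by simp
    have key: "2 * t * (r \<bullet> r) + t^2 * (q r - l * (r \<bullet> r)) \<le> 0" for t
    proof -
      have "u + t *\<^sub>R r \<in> W" using Wsub[OF uW rW, of 1 t] by simp
      then have b: "q (u + t *\<^sub>R r) \<le> l * ((u + t *\<^sub>R r) \<bullet> (u + t *\<^sub>R r))" by (rule bound)
      have sy: "u \<bullet> (C *v r) = r \<bullet> (C *v u)"
        by (metis inner_commute inner_mat_sym sym)
      have "q (u + t *\<^sub>R r) = l + 2 * t * (r \<bullet> r) + t^2 * q r"
        unfolding q_def using sy rCu
        by (simp add: matrix_vector_right_distrib matrix_vector_mult_scaleR inner_add_left inner_add_right
            l_def q_def power2_eq_square algebra_simps)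
      moreover have "(u + t *\<^sub>R r) \<bullet> (u + t *\<^sub>R r) = 1 + t^2 * (r \<bullet> r)"
        using uu ru by (simp add: inner_add_left inner_add_right inner_commute power2_eq_square)
      ultimately show ?thesis using b by (simp add: algebra_simps)
    qed
    define E where "E = q r - l * (r \<bullet> r)"
    define c where "c = \<bar>E\<bar> + 1"
    have c0: "c > 0" unfolding c_def by simp
    define t where "t = (r \<bullet> r) / c"
    have t0: "t > 0" using c0 rr by (simp add: t_def)
    have "\<bar>E\<bar> / c < 1" using c0 unfolding c_def by (simp add: divide_less_eq)
    then have "\<bar>t * E\<bar> < r \<bullet> r" using rr c0
      by (simp add: t_def abs_mult field_simps)
    moreover have "t * (2 * (r \<bullet> r) + t * E) \<le> 0"
      using key[of t] by (simp add: E_def power2_eq_square algebra_simps)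
    then have "2 * (r \<bullet> r) + t * E \<le> 0" using t0
      by (simp add: mult_le_0_iff)
    ultimately show False using rr by linarith
  qed
  then have "C *v u = l *\<^sub>R u" by (simp add: r_def)
  then show ?thesis using nu uW by (auto simp: W_def)
qed

lemma eig_sets:
  fixes C :: "real^'n^'n"
  assumes sym: "transpose C = C"
  shows "k \<le> CARD('n) \<Longrightarrow> \<exists>S. finite S \<and> card S = k \<and> (\<forall>s\<in>S. norm s = 1 \<and> (\<exists>l. C *v s = l *\<^sub>R s))
     \<and> (\<forall>s\<in>S. \<forall>t\<in>S. s \<noteq> t \<longrightarrow> s \<bullet> t = 0)"
proof (induction k)
  case 0 then show ?case by (intro exI[of _ "{}"]) auto
next
  case (Suc k)
  then obtain S where fS: "finite S" and cS: "card S = k" and eS: "\<forall>s\<in>S. norm s = 1 \<and> (\<exists>l. C *v s = l *\<^sub>R s)"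
    and oS: "\<forall>s\<in>S. \<forall>t\<in>S. s \<noteq> t \<longrightarrow> s \<bullet> t = 0" by auto
  have "dim S \<le> card S" by (rule dim_le_card) (auto simp: fS span_base)
  then have "dim S < DIM(real^'n)" using Suc.prems cS by simp
  then obtain x0 where x0: "x0 \<noteq> 0" "\<And>y. y \<in> span S \<Longrightarrow> orthogonal x0 y"
    using orthogonal_to_subspace_exists by blast
  have x0S: "\<forall>s\<in>S. s \<bullet> x0 = 0" using x0(2) by (auto simp: orthogonal_def inner_commute span_base)
  have inv: "\<forall>s\<in>S. s \<bullet> (C *v x) = 0" if "\<forall>s\<in>S. s \<bullet> x = 0" for x
  proof
    fix s assume "s \<in> S"
    then obtain l where l: "C *v s = l *\<^sub>R s" using eS by blast
    have "s \<bullet> (C *v x) = (C *v s) \<bullet> x" using inner_mat_sym[of s C x] sym by simp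
    also have "\<dots> = 0" using l that \<open>s \<in> S\<close> by simp
    finally show "s \<bullet> (C *v x) = 0" .
  qed
  obtain u where u: "norm u = 1" "\<forall>s\<in>S. s \<bullet> u = 0" "\<exists>l. C *v u = l *\<^sub>R u"
    using eig_in_perp[OF sym inv x0(1) x0S] by blast
  have "u \<notin> S" using u(1,2) by (metis norm_eq_1 zero_neq_one)
  show ?case
    apply (rule exI[of _ "insert u S"])
    using fS cS eS oS u \<open>u \<notin> S\<close> by (auto simp: inner_commute)
qed

lemma spectral:
  fixes C :: "real^'n^'n"
  assumes sym: "transpose C = C"
  shows "\<exists>U d. orthogonal_matrix U \<and> C = U ** diag_mat d ** transpose U"
proof -
  obtain S where fS: "finite S" and cS: "card S = CARD('n)" and eS: "\<forall>s\<in>S. norm s = 1 \<and> (\<exists>l. C *v s = l *\<^sub>R s)"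
    and oS: "\<forall>s\<in>S. \<forall>t\<in>S. s \<noteq> t \<longrightarrow> s \<bullet> t = 0" using eig_sets[OF sym, of "CARD('n)"] by auto
  obtain g where g: "bij_betw g (UNIV::'n set) S"
    using finite_same_card_bij[of "UNIV::'n set" S] fS cS by auto
  have gS: "g j \<in> S" for j using g by (auto simp: bij_betw_def)
  have ginj: "g j = g k \<Longrightarrow> j = k" for j k using g by (auto simp: bij_betw_def inj_def)
  define d where "d = (\<lambda>j. SOME l. C *v g j = l *\<^sub>R g j)"
  have gd: "C *v g j = d j *\<^sub>R g j" for j
    unfolding d_def using eS gS[of j] by (metis (mono_tags, lifting) someI_ex)
  define U :: "real^'n^'n" where "U = (\<chi> i j. g j $ i)"
  have gg: "g j \<bullet> g k = (if j = k then 1 else 0)" for j k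
  proof (cases "j = k")
    case True then show ?thesis using eS gS[of j] by (simp add: norm_eq_1)
  next
    case False then have "g j \<noteq> g k" using ginj by blast
    then show ?thesis using oS gS[of j] gS[of k] False by simp
  qed
  have "transpose U ** U = mat 1"
    unfolding U_def using gg
    by (simp add: matrix_matrix_mult_def transpose_def mat_def vec_eq_iff inner_vec_def)
  then have oU: "orthogonal_matrix U" by (simp add: orthogonal_matrix)
  have CU: "C ** U = U ** diag_mat d"
  proof -
    have "(C ** U) $ i $ j = (U ** diag_mat d) $ i $ j" for i j
    proof -
      have "(C ** U) $ i $ j = (C *v g j) $ i"
        by (simp add: U_def matrix_matrix_mult_def matrix_vector_mult_def)
      also have "\<dots> = d j * g j $ i" by (simp add: gd)
      also have "\<dots> = (U ** diag_mat d) $ i $ j"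
        by (simp add: U_def matrix_matrix_mult_def diag_mat_def if_distrib if_distribR cong: if_cong)
      finally show ?thesis .
    qed
    then show ?thesis by (simp add: vec_eq_iff)
  qed
  have "C = C ** (U ** transpose U)" using oU by (simp add: orthogonal_matrix_def)
  also have "\<dots> = U ** diag_mat d ** transpose U" by (simp add: matrix_mul_assoc CU)
  finally show ?thesis using oU by blast
qed

lemma diag_mult: fixes a b :: "'n::finite \<Rightarrow> real" shows "diag_mat a ** diag_mat b = diag_mat (\<lambda>i. a i * b i)"
proof -
  have "(\<Sum>k\<in>UNIV. (if i = k then a i else 0) * (if k = j then b k else (0::real))) = (if i = j then a i * b i else 0)" for i j :: 'n
  proof -
    have "(\<Sum>k\<in>UNIV. (if i = k then a i else 0) * (if k = j then b k else (0::real))) = (\<Sum>k\<in>UNIV. if k = i then (if i = j then a i * b i else 0) else 0)"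
      by (rule sum.cong) auto
    then show ?thesis by simp
  qed
  then show ?thesis by (simp add: diag_mat_def matrix_matrix_mult_def vec_eq_iff)
qed
lemma diag_transpose: "transpose (diag_mat a) = diag_mat a"
  by (simp add: diag_mat_def transpose_def vec_eq_iff)
lemma diag_one: "diag_mat (\<lambda>_. 1) = mat 1"
  by (simp add: diag_mat_def mat_def vec_eq_iff)
lemma diag_axis: "axis i 1 \<bullet> (diag_mat d *v axis i 1) = d i"
proof -
  have "diag_mat d *v axis i 1 = axis i (d i)"
  proof -
    have "(\<Sum>j\<in>UNIV. (if k = j then d k else 0) * axis i 1 $ j) = axis i (d i) $ k" for k
    proof -
      have "(\<Sum>j\<in>UNIV. (if k = j then d k else 0) * axis i (1::real) $ j) = (\<Sum>j\<in>UNIV. if j = k then axis i (d i) $ k else 0)"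
        by (rule sum.cong) (auto simp: axis_def)
      then show ?thesis by simp
    qed
    then show ?thesis by (simp add: diag_mat_def matrix_vector_mult_def vec_eq_iff)
  qed
  then show ?thesis by (simp add: inner_axis')
qed
lemma inv_sqrt_props:
  fixes B :: "real^'n^'n"
  assumes B: "invertible B" and C: "C = B ** transpose B"
  shows "transpose (inv_sqrt_mat C) = inv_sqrt_mat C \<and> inv_sqrt_mat C ** C ** inv_sqrt_mat C = mat 1"
proof -
  have sym: "transpose C = C" using C by (simp add: matrix_transpose_mul)
  let ?P = "\<lambda>S. \<exists>U d. orthogonal_matrix U \<and> C = U ** diag_mat d ** transpose U
      \<and> S = U ** diag_mat (\<lambda>i. 1 / sqrt (d i)) ** transpose U"
  obtain U0 d0 where h0: "orthogonal_matrix U0" "C = U0 ** diag_mat d0 ** transpose U0"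
    using spectral[OF sym] apply (elim exE conjE) apply (rule that) apply assumption+ done
  have "?P (U0 ** diag_mat (\<lambda>i. 1 / sqrt (d0 i)) ** transpose U0)"
    apply (rule exI[of _ U0], rule exI[of _ d0]) using h0 by (intro conjI) (assumption, assumption, rule refl)
  then have "\<exists>S. ?P S" by (rule exI)
  then have "?P (inv_sqrt_mat C)" unfolding inv_sqrt_mat_def by (rule someI_ex)
  then obtain U d where oU: "orthogonal_matrix U" and CU: "C = U ** diag_mat d ** transpose U"
    and SU: "inv_sqrt_mat C = U ** diag_mat (\<lambda>i. 1 / sqrt (d i)) ** transpose U"
    apply (elim exE conjE) apply (rule that) apply assumption+ done
  have UtU: "transpose U ** U = mat 1" and UUt: "U ** transpose U = mat 1"
    using oU by (auto simp: orthogonal_matrix_def)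
  have dpos: "d i > 0" for i
  proof -
    let ?e = "axis i (1::real)"
    let ?y = "U *v ?e"
    have "transpose U ** C ** U = (transpose U ** U) ** diag_mat d ** (transpose U ** U)"
      unfolding CU by (simp only: matrix_mul_assoc)
    then have "transpose U ** C ** U = diag_mat d" by (simp only: UtU matrix_mul_lid matrix_mul_rid)
    then have "d i = ?e \<bullet> ((transpose U ** C ** U) *v ?e)" by (simp add: diag_axis)
    also have "\<dots> = ?e \<bullet> (transpose U *v (C *v ?y))"
      by (simp only: matrix_vector_mul_assoc matrix_mul_assoc)
    also have "\<dots> = ?y \<bullet> (C *v ?y)"
      by (simp only: inner_mat_sym[of ?e "transpose U"] transpose_transpose)
    also have "\<dots> = ?y \<bullet> (B *v (transpose B *v ?y))"
      by (simp only: C matrix_vector_mul_assoc matrix_mul_assoc)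
    also have "\<dots> = (transpose B *v ?y) \<bullet> (transpose B *v ?y)"
      by (simp only: inner_mat_sym[of ?y B])
    finally have di: "d i = (transpose B *v ?y) \<bullet> (transpose B *v ?y)" .
    have "?y \<noteq> 0"
    proof
      assume "?y = 0"
      then have "transpose U *v ?y = 0" by simp
      then have "(transpose U ** U) *v ?e = 0" by (simp only: matrix_vector_mul_assoc)
      then have "?e = 0" by (simp only: UtU matrix_vector_mul_lid)
      then show False by (simp add: axis_eq_0_iff)
    qed
    moreover have "inj ((*v) (transpose B))"
      by (rule inj_matrix_vector_mult[OF transpose_invertible[OF B]])
    ultimately have "transpose B *v ?y \<noteq> transpose B *v 0"
      by (metis injD)
    then have "transpose B *v ?y \<noteq> 0" by (simp del: transpose_matrix_vector)
    then show ?thesis using di by (simp del: transpose_matrix_vector)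
  qed
  have "transpose (inv_sqrt_mat C) = inv_sqrt_mat C"
    by (simp only: SU matrix_transpose_mul diag_transpose transpose_transpose matrix_mul_assoc)
  moreover have "inv_sqrt_mat C ** C ** inv_sqrt_mat C = mat 1"
  proof -
    have "inv_sqrt_mat C ** C ** inv_sqrt_mat C =
      U ** (diag_mat (\<lambda>i. 1 / sqrt (d i)) ** (transpose U ** U) ** diag_mat d ** (transpose U ** U) ** diag_mat (\<lambda>i. 1 / sqrt (d i))) ** transpose U"
      unfolding SU by (subst (1) CU) (simp only: matrix_mul_assoc)
    also have "diag_mat (\<lambda>i. 1 / sqrt (d i)) ** (transpose U ** U) ** diag_mat d ** (transpose U ** U) ** diag_mat (\<lambda>i. 1 / sqrt (d i)) = mat 1"
    proof -
      have "(\<lambda>i. 1 / sqrt (d i) * d i * (1 / sqrt (d i))) = (\<lambda>_. 1)"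
      proof
        fix i have "sqrt (d i) * sqrt (d i) = d i" using dpos[of i] by simp
        then show "1 / sqrt (d i) * d i * (1 / sqrt (d i)) = 1" using dpos[of i] by (simp add: field_simps)
      qed
      then show ?thesis by (simp only: UtU matrix_mul_rid diag_mult diag_one)
    qed
    finally show ?thesis by (simp only: UUt matrix_mul_rid)
  qed
  ultimately show ?thesis by blast
qed

lemma ab_bound: "\<bar>a * b\<bar> \<le> a\<^sup>2 + (b::real)\<^sup>2"
proof -
  have "0 \<le> (\<bar>a\<bar> - \<bar>b\<bar>)\<^sup>2" by simp
  then have "2 * \<bar>a\<bar> * \<bar>b\<bar> \<le> a\<^sup>2 + b\<^sup>2" by (simp add: power2_diff)
  moreover have "\<bar>a * b\<bar> = \<bar>a\<bar> * \<bar>b\<bar>" by (simp add: abs_mult)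
  moreover have "0 \<le> \<bar>a\<bar> * \<bar>b\<bar>" by simp
  ultimately show ?thesis by linarith
qed

lemma cov_affine:
  fixes M :: "'a measure" and x :: "'a \<Rightarrow> real^'p" and A :: "real^'p^'p" and b :: "real^'p"
  assumes P: "prob_space M" and xm: "x \<in> borel_measurable M"
    and sq: "\<And>i. integrable M (\<lambda>\<omega>. (x \<omega> $ i)\<^sup>2)"
  shows "cov_mat M (\<lambda>\<omega>. A *v x \<omega> + b) = A ** cov_mat M x ** transpose A"
proof -
  interpret prob_space M by (rule P)
  define m where "m = mean_vec M x"
  have Xm[measurable]: "(\<lambda>\<omega>. x \<omega> $ i) \<in> borel_measurable M" for i
    using measurable_compose[OF xm borel_measurable_nth] by simp
  have int1: "integrable M (\<lambda>\<omega>. x \<omega> $ i)" for i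
    by (rule square_integrable_imp_integrable[OF Xm sq])
  have int2: "integrable M (\<lambda>\<omega>. x \<omega> $ i * x \<omega> $ j)" for i j
  proof (rule Bochner_Integration.integrable_bound[of M "\<lambda>\<omega>. (x \<omega> $ i)\<^sup>2 + (x \<omega> $ j)\<^sup>2"])
    show "integrable M (\<lambda>\<omega>. (x \<omega> $ i)\<^sup>2 + (x \<omega> $ j)\<^sup>2)" using sq by simp
    show "(\<lambda>\<omega>. x \<omega> $ i * x \<omega> $ j) \<in> borel_measurable M" by measurable
    show "AE \<omega> in M. norm (x \<omega> $ i * x \<omega> $ j) \<le> norm ((x \<omega> $ i)\<^sup>2 + (x \<omega> $ j)\<^sup>2)"
    proof (rule AE_I2)
      fix \<omega>
      have "\<bar>x \<omega> $ i * x \<omega> $ j\<bar> \<le> (x \<omega> $ i)\<^sup>2 + (x \<omega> $ j)\<^sup>2"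
        by (rule ab_bound)
      then show "norm (x \<omega> $ i * x \<omega> $ j) \<le> norm ((x \<omega> $ i)\<^sup>2 + (x \<omega> $ j)\<^sup>2)" by simp
    qed
  qed
  have intY: "integrable M (\<lambda>\<omega>. (x \<omega> $ k - m $ k) * (x \<omega> $ l - m $ l))" for k l
  proof -
    have "(\<lambda>\<omega>. (x \<omega> $ k - m $ k) * (x \<omega> $ l - m $ l)) =
      (\<lambda>\<omega>. x \<omega> $ k * x \<omega> $ l - m $ l * x \<omega> $ k - m $ k * x \<omega> $ l + m $ k * m $ l)"
      by (auto simp: algebra_simps)
    then show ?thesis using int1 int2 by simp
  qed
  have zc: "(A *v x \<omega> + b) $ i = (\<Sum>k\<in>UNIV. A $ i $ k * x \<omega> $ k) + b $ i" for \<omega> i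
    by (simp add: matrix_vector_mult_def)
  have mz: "mean_vec M (\<lambda>\<omega>. A *v x \<omega> + b) $ i = (\<Sum>k\<in>UNIV. A $ i $ k * m $ k) + b $ i" for i
  proof -
    have "mean_vec M (\<lambda>\<omega>. A *v x \<omega> + b) $ i = integral\<^sup>L M (\<lambda>\<omega>. (\<Sum>k\<in>UNIV. A $ i $ k * x \<omega> $ k) + b $ i)"
      unfolding mean_vec_def vec_lambda_beta zc ..
    also have "\<dots> = (\<Sum>k\<in>UNIV. A $ i $ k * m $ k) + b $ i"
      using int1 by (simp add: integral_sum m_def mean_vec_def prob_space)
    finally show ?thesis .
  qed
  have dz: "(A *v x \<omega> + b) $ i - mean_vec M (\<lambda>\<omega>. A *v x \<omega> + b) $ i = (\<Sum>k\<in>UNIV. A $ i $ k * (x \<omega> $ k - m $ k))" for \<omega> i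
    unfolding mz zc by (simp add: sum_subtractf right_diff_distrib)
  have "cov_mat M (\<lambda>\<omega>. A *v x \<omega> + b) $ i $ j = (A ** cov_mat M x ** transpose A) $ i $ j" for i j
  proof -
    have "cov_mat M (\<lambda>\<omega>. A *v x \<omega> + b) $ i $ j =
      integral\<^sup>L M (\<lambda>\<omega>. \<Sum>k\<in>UNIV. \<Sum>l\<in>UNIV. (A $ i $ k * A $ j $ l) * ((x \<omega> $ k - m $ k) * (x \<omega> $ l - m $ l)))"
    proof -
      have "((A *v x \<omega> + b) $ i - mean_vec M (\<lambda>\<omega>. A *v x \<omega> + b) $ i) * ((A *v x \<omega> + b) $ j - mean_vec M (\<lambda>\<omega>. A *v x \<omega> + b) $ j)
        = (\<Sum>k\<in>UNIV. \<Sum>l\<in>UNIV. (A $ i $ k * A $ j $ l) * ((x \<omega> $ k - m $ k) * (x \<omega> $ l - m $ l)))" for \<omega>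
        unfolding dz sum_product by (simp add: mult_ac)
      then show ?thesis by (simp add: cov_mat_def)
    qed
    also have "\<dots> = (\<Sum>k\<in>UNIV. \<Sum>l\<in>UNIV. (A $ i $ k * A $ j $ l) * cov_mat M x $ k $ l)"
      using intY by (simp add: integral_sum cov_mat_def m_def)
    also have "\<dots> = (\<Sum>l\<in>UNIV. \<Sum>k\<in>UNIV. A $ i $ k * cov_mat M x $ k $ l * A $ j $ l)"
      by (subst sum.swap) (simp add: mult_ac)
    also have "\<dots> = (A ** cov_mat M x ** transpose A) $ i $ j"
      by (simp add: matrix_matrix_mult_def transpose_def sum_distrib_right)
    finally show ?thesis .
  qed
  then show ?thesis by (simp add: vec_eq_iff)
qed

lemma lin_comb_partial:
  fixes z :: "'a \<Rightarrow> real^'p" and w :: "real^'p"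
  shows "(\<lambda>\<omega>. \<Sum>j\<in>F. w $ j * z \<omega> $ j) \<in> lin_combs z"
proof -
  define c :: "real^'p" where "c = (\<chi> j. if j \<in> F then w $ j else 0)"
  have "c \<bullet> z \<omega> + 0 = (\<Sum>j\<in>F. w $ j * z \<omega> $ j)" for \<omega>
  proof -
    have "c \<bullet> z \<omega> = (\<Sum>j\<in>UNIV. if j \<in> F then w $ j * z \<omega> $ j else 0)"
      by (simp add: c_def inner_vec_def if_distrib if_distribR cong: if_cong)
    also have "\<dots> = (\<Sum>j\<in>UNIV \<inter> F. w $ j * z \<omega> $ j)"
      by (rule sum.inter_restrict[symmetric]) simp
    finally show ?thesis by simp
  qed
  then show ?thesis unfolding lin_combs_def by (intro CollectI exI[of _ c] exI[of _ 0]) auto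
qed

lemma lin_comb_single:
  fixes z :: "'a \<Rightarrow> real^'p"
  shows "(\<lambda>\<omega>. a * z \<omega> $ k) \<in> lin_combs z"
  unfolding lin_combs_def
  by (intro CollectI exI[of _ "axis k a"] exI[of _ 0]) (simp add: inner_axis')

lemma disp_single:
  fixes z :: "'a \<Rightarrow> real^'p"
  assumes "sq_dispersion_on M z D"
  shows "D (distr M borel (\<lambda>\<omega>. a * z \<omega> $ k)) = a\<^sup>2 * D (distr M borel (\<lambda>\<omega>. z \<omega> $ k))"
proof -
  have "(\<lambda>\<omega>. 1 * z \<omega> $ k) \<in> lin_combs z" by (rule lin_comb_single)
  then have mem: "(\<lambda>\<omega>. z \<omega> $ k) \<in> lin_combs z" by simp
  have all: "\<forall>u\<in>lin_combs z. \<forall>a b::real.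
        D (distr M borel (\<lambda>\<omega>. a * u \<omega> + b)) = a\<^sup>2 * D (distr M borel u)"
    using assms unfolding sq_dispersion_on_def by blast
  have "D (distr M borel (\<lambda>\<omega>. a * z \<omega> $ k + 0)) = a\<^sup>2 * D (distr M borel (\<lambda>\<omega>. z \<omega> $ k))"
    using all[rule_format, OF mem, of a 0] by simp
  then show ?thesis by simp
qed

lemma disp_zero:
  fixes z :: "'a \<Rightarrow> real^'p"
  assumes "sq_dispersion_on M z D"
  shows "D (distr M borel (\<lambda>\<omega>. 0)) = 0"
  using disp_single[OF assms, of 0 undefined] by simp

lemma indep_terms:
  fixes z :: "'a \<Rightarrow> real^'p"
  assumes P: "prob_space M" and ind: "prob_space.indep_vars M (\<lambda>_. borel) (\<lambda>j \<omega>. z \<omega> $ j) UNIV"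
    and F: "finite F" "k \<notin> F"
  shows "prob_space.indep_var M borel (\<lambda>\<omega>. w $ k * z \<omega> $ k) borel (\<lambda>\<omega>. \<Sum>j\<in>F. w $ j * z \<omega> $ j)"
proof -
  interpret prob_space M by (rule P)
  have "indep_vars (\<lambda>_. borel) (\<lambda>j \<omega>. w $ j * z \<omega> $ j) UNIV"
    using indep_vars_compose2[OF ind, of "\<lambda>j t. w $ j * t" "\<lambda>_. borel"] by simp
  then have "indep_vars (\<lambda>_. borel) (\<lambda>j \<omega>. w $ j * z \<omega> $ j) (insert k F)"
    by (rule indep_vars_subset) simp
  from indep_vars_sum[OF F this] show ?thesis .
qed

lemma sub_sum:
  fixes z :: "'a \<Rightarrow> real^'p"
  assumes P: "prob_space M" and ind: "prob_space.indep_vars M (\<lambda>_. borel) (\<lambda>j \<omega>. z \<omega> $ j) UNIV"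
    and disp: "sq_dispersion_on M z D" and sub: "subadditive_on M z D"
    and F: "finite F"
  shows "D (distr M borel (\<lambda>\<omega>. \<Sum>j\<in>F. w $ j * z \<omega> $ j)) \<le> (\<Sum>j\<in>F. (w $ j)\<^sup>2 * D (distr M borel (\<lambda>\<omega>. z \<omega> $ j)))"
  using F
proof (induction F rule: finite_induct)
  case empty then show ?case using disp_zero[OF disp] by simp
next
  case (insert k F)
  have eq: "(\<lambda>\<omega>. \<Sum>j\<in>insert k F. w $ j * z \<omega> $ j) = (\<lambda>\<omega>. w $ k * z \<omega> $ k + (\<Sum>j\<in>F. w $ j * z \<omega> $ j))"
    using insert by simp
  have "D (distr M borel (\<lambda>\<omega>. w $ k * z \<omega> $ k + (\<Sum>j\<in>F. w $ j * z \<omega> $ j)))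
     \<le> D (distr M borel (\<lambda>\<omega>. w $ k * z \<omega> $ k)) + D (distr M borel (\<lambda>\<omega>. \<Sum>j\<in>F. w $ j * z \<omega> $ j))"
    using sub[unfolded subadditive_on_def, rule_format, OF lin_comb_single lin_comb_partial indep_terms[OF P ind insert(1,2)]] .
  then show ?case using insert eq disp_single[OF disp] by simp
qed

lemma super_sum:
  fixes z :: "'a \<Rightarrow> real^'p"
  assumes P: "prob_space M" and ind: "prob_space.indep_vars M (\<lambda>_. borel) (\<lambda>j \<omega>. z \<omega> $ j) UNIV"
    and disp: "sq_dispersion_on M z D" and sup: "superadditive_on M z D"
    and F: "finite F"
  shows "D (distr M borel (\<lambda>\<omega>. \<Sum>j\<in>F. w $ j * z \<omega> $ j)) \<ge> (\<Sum>j\<in>F. (w $ j)\<^sup>2 * D (distr M borel (\<lambda>\<omega>. z \<omega> $ j)))"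
  using F
proof (induction F rule: finite_induct)
  case empty then show ?case using disp_zero[OF disp] by simp
next
  case (insert k F)
  have eq: "(\<lambda>\<omega>. \<Sum>j\<in>insert k F. w $ j * z \<omega> $ j) = (\<lambda>\<omega>. w $ k * z \<omega> $ k + (\<Sum>j\<in>F. w $ j * z \<omega> $ j))"
    using insert by simp
  have "D (distr M borel (\<lambda>\<omega>. w $ k * z \<omega> $ k + (\<Sum>j\<in>F. w $ j * z \<omega> $ j)))
     \<ge> D (distr M borel (\<lambda>\<omega>. w $ k * z \<omega> $ k)) + D (distr M borel (\<lambda>\<omega>. \<Sum>j\<in>F. w $ j * z \<omega> $ j))"
    using sup[unfolded superadditive_on_def, rule_format, OF lin_comb_single lin_comb_partial indep_terms[OF P ind insert(1,2)]] .
  then show ?case using insert eq disp_single[OF disp] by simp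
qed

theorem theorem5:
  fixes M :: "'a measure" and x :: "'a \<Rightarrow> real^'p"
    and A :: "real^'p^'p" and b :: "real^'p"
    and D :: "real measure \<Rightarrow> real" and v :: "real^'p"
  assumes "prob_space M"
    and "x \<in> borel_measurable M"
    and "\<And>i. integrable M (\<lambda>\<omega>. (x \<omega> $ i)\<^sup>2)"
    and "invertible (cov_mat M x)"
    and "invertible A"
    and "prob_space.indep_vars M (\<lambda>_. borel) (\<lambda>j \<omega>. (A *v x \<omega> + b) $ j) UNIV"
    and "mean_vec M (\<lambda>\<omega>. A *v x \<omega> + b) = 0"
    and "cov_mat M (\<lambda>\<omega>. A *v x \<omega> + b) = mat 1"
    and "sq_dispersion_on M (\<lambda>\<omega>. A *v x \<omega> + b) D"
    and "v \<bullet> v = 1"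
  shows "(subadditive_on M (\<lambda>\<omega>. A *v x \<omega> + b) D \<longrightarrow>
            D (distr M borel (\<lambda>\<omega>. v \<bullet> standardize M x \<omega>))
              \<le> (MAX j. D (distr M borel (\<lambda>\<omega>. (A *v x \<omega> + b) $ j))))
       \<and> (superadditive_on M (\<lambda>\<omega>. A *v x \<omega> + b) D \<longrightarrow>
            D (distr M borel (\<lambda>\<omega>. v \<bullet> standardize M x \<omega>))
              \<ge> (MIN j. D (distr M borel (\<lambda>\<omega>. (A *v x \<omega> + b) $ j))))"
proof -
  note P = assms(1)
  define z where "z = (\<lambda>\<omega>. A *v x \<omega> + b)"
  define C where "C = cov_mat M x"
  obtain A' where AA': "A ** A' = mat 1" and A'A: "A' ** A = mat 1"
    using assms(5) unfolding invertible_def by blast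
  have invA': "invertible A'" using AA' A'A unfolding invertible_def by blast
  have ACA: "A ** C ** transpose A = mat 1"
    using cov_affine[OF assms(1,2,3), of A b] assms(8) by (simp add: C_def)
  have tAA': "transpose A ** transpose A' = mat 1"
    by (metis A'A matrix_transpose_mul transpose_mat)
  have CB: "C = A' ** transpose A'"
  proof -
    have "C = (A' ** A) ** C ** (transpose A ** transpose A')"
      by (simp only: A'A tAA' matrix_mul_lid matrix_mul_rid)
    also have "\<dots> = A' ** (A ** C ** transpose A) ** transpose A'"
      by (simp only: matrix_mul_assoc)
    finally show ?thesis by (simp only: ACA matrix_mul_rid)
  qed
  define S where "S = inv_sqrt_mat C"
  have St: "transpose S = S" and SCS: "S ** C ** S = mat 1"
    using inv_sqrt_props[OF invA' CB] by (auto simp: S_def)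
  define w where "w = transpose (S ** A') *v v"
  have ww: "w \<bullet> w = 1"
  proof -
    have "w \<bullet> w = v \<bullet> ((S ** A') *v w)"
      unfolding w_def by (simp only: inner_mat_sym[of v "S ** A'"])
    also have "\<dots> = v \<bullet> ((S ** C ** S) *v v)"
      by (simp only: w_def matrix_vector_mul_assoc CB matrix_transpose_mul St matrix_mul_assoc)
    also have "\<dots> = 1" by (simp add: SCS assms(10))
    finally show ?thesis .
  qed
  define c0 where "c0 = - (v \<bullet> (S *v (A' *v b + mean_vec M x)))"
  have pt: "v \<bullet> standardize M x \<omega> = 1 * (w \<bullet> z \<omega>) + c0" for \<omega>
  proof -
    have xo: "x \<omega> = A' *v z \<omega> - A' *v b"
    proof -
      have "A' *v z \<omega> = (A' ** A) *v x \<omega> + A' *v b"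
        by (simp add: z_def matrix_vector_right_distrib matrix_vector_mul_assoc)
      then show ?thesis by (simp add: A'A)
    qed
    have "v \<bullet> standardize M x \<omega> = v \<bullet> (S *v (A' *v z \<omega>)) - v \<bullet> (S *v (A' *v b + mean_vec M x))"
      by (simp add: standardize_def C_def[symmetric] S_def[symmetric] xo matrix_vector_right_distrib
          matrix_vector_mult_diff_distrib inner_diff_right inner_add_right)
    also have "v \<bullet> (S *v (A' *v z \<omega>)) = w \<bullet> z \<omega>"
      by (simp only: w_def matrix_vector_mul_assoc inner_mat_sym[of v])
    finally show ?thesis by (simp add: c0_def)
  qed
  have zlin: "(\<lambda>\<omega>. w \<bullet> z \<omega>) \<in> lin_combs z"
    unfolding lin_combs_def by (intro CollectI exI[of _ w] exI[of _ 0]) simp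
  have disp: "sq_dispersion_on M z D" using assms(9) by (simp add: z_def)
  have allD: "\<forall>u\<in>lin_combs z. \<forall>a b::real.
        D (distr M borel (\<lambda>\<omega>. a * u \<omega> + b)) = a\<^sup>2 * D (distr M borel u)"
    using disp unfolding sq_dispersion_on_def by blast
  have "D (distr M borel (\<lambda>\<omega>. v \<bullet> standardize M x \<omega>)) = D (distr M borel (\<lambda>\<omega>. 1 * (w \<bullet> z \<omega>) + c0))"
    by (simp only: pt)
  also have "\<dots> = D (distr M borel (\<lambda>\<omega>. w \<bullet> z \<omega>))"
    using allD[rule_format, OF zlin, of 1 c0] by simp
  also have "(\<lambda>\<omega>. w \<bullet> z \<omega>) = (\<lambda>\<omega>. \<Sum>j\<in>UNIV. w $ j * z \<omega> $ j)"
    by (simp add: inner_vec_def)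
  finally have Deq: "D (distr M borel (\<lambda>\<omega>. v \<bullet> standardize M x \<omega>)) = D (distr M borel (\<lambda>\<omega>. \<Sum>j\<in>UNIV. w $ j * z \<omega> $ j))" .
  have ind: "prob_space.indep_vars M (\<lambda>_. borel) (\<lambda>j \<omega>. z \<omega> $ j) UNIV"
    using assms(6) by (simp add: z_def)
  define Dz where "Dz = (\<lambda>j. D (distr M borel (\<lambda>\<omega>. z \<omega> $ j)))"
  have sw: "(\<Sum>j\<in>UNIV. (w $ j)\<^sup>2) = 1" using ww by (simp add: inner_vec_def power2_eq_square)
  have part1: "D (distr M borel (\<lambda>\<omega>. v \<bullet> standardize M x \<omega>)) \<le> (MAX j. Dz j)"
    if sub: "subadditive_on M z D"
  proof -
    have "D (distr M borel (\<lambda>\<omega>. v \<bullet> standardize M x \<omega>)) \<le> (\<Sum>j\<in>UNIV. (w $ j)\<^sup>2 * Dz j)"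
      unfolding Deq Dz_def by (rule sub_sum[OF P ind disp sub]) simp
    also have "\<dots> \<le> (\<Sum>j\<in>UNIV. (w $ j)\<^sup>2 * (MAX j. Dz j))"
      by (intro sum_mono mult_left_mono) (auto intro: Max_ge)
    also have "\<dots> = (MAX j. Dz j)" by (simp add: sum_distrib_right[symmetric] sw)
    finally show ?thesis .
  qed
  have part2: "D (distr M borel (\<lambda>\<omega>. v \<bullet> standardize M x \<omega>)) \<ge> (MIN j. Dz j)"
    if sup: "superadditive_on M z D"
  proof -
    have "(MIN j. Dz j) = (\<Sum>j\<in>UNIV. (w $ j)\<^sup>2 * (MIN j. Dz j))"
      by (simp add: sum_distrib_right[symmetric] sw)
    also have "\<dots> \<le> (\<Sum>j\<in>UNIV. (w $ j)\<^sup>2 * Dz j)"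
      by (intro sum_mono mult_left_mono) (auto intro: Min_le)
    also have "\<dots> \<le> D (distr M borel (\<lambda>\<omega>. v \<bullet> standardize M x \<omega>))"
      unfolding Deq Dz_def by (rule super_sum[OF P ind disp sup]) simp
    finally show ?thesis .
  qed
  show ?thesis using part1 part2 unfolding z_def Dz_def by blast
qed

end
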